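(* Consider the APAPC iterates with arbitrary parameters $\eta,\theta>0$, $\tau\in(0,1]$ and $0<\alpha\le\mu$. Then for every $k\ge0$, \[ -\frac{1}{2\eta}\|x^{k+1}-x^k\|^2 \le -\frac\eta4\|y^{k+1}-y^*\|^2 + \eta\alpha^2\|x^{k+1}-x^*\|^2 + 2\eta L\,\mathrm{D}_F(x_g^k,x^* ). \]
   Context: $F:\mathbb{R}^{nd}\to\mathbb{R}$ is differentiable, $\mu$-strongly convex and $L$-smooth, $0<\mu\le L$. $\mathbf{W}$ is a symmetric positive semidefinite $nd\times nd$ matrix whose kernel is the consensus space $\{(x_1,\dots,x_n)\in(\mathbb{R}^d)^n:x_1=\dots=x_n\}$. $x^*$ is the unique minimizer of $F$ over $\ker(\mathbf{W})$ and $y^*:=-\nabla F(x^* )\in\mathrm{range}(\mathbf{W})$. $\mathrm{D}_F(u,v):=F(u)-F(v)-\langle\nabla F(v),u-v\rangle$. APAPC: given $x^0\in\mathbb{R}^{nd}$, $y^0\in\mathrm{range}(\mathbf{W})$, parameters $\eta,\theta,\alpha>0$, $\tau\in(0,1]$, set $x_f^0=x^0$ and for $k\ge0$: $x_g^k=\tau x^k+(1-\tau)x_f^k$; $x^{k+1/2}=(1+\eta\alpha)^{-1}(x^k-\eta(\nabla F(x_g^k)-\alpha x_g^k+y^k))$; $y^{k+1}=y^k+\theta\mathbf{W}x^{k+1/2}$; $x^{k+1}=(1+\eta\alpha)^{-1}(x^k-\eta(\nabla F(x_g^k)-\alpha x_g^k+y^{k+1}))$; $x_f^{k+1}=x_g^k+\frac{2\tau}{2-\tau}(x^{k+1}-x^k)$.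 *)

theory Defs
  imports "HOL-Analysis.Analysis"
begin

text \<open>Vectors of R^{nd} are modelled as elements of real^'d^'n, i.e. n blocks of size d.\<close>

definition consensus :: "(real^'d^'n) set" where
  "consensus = {x. \<forall>i j. x $ i = x $ j}"

definition strongly_convex :: "real \<Rightarrow> ('a::real_inner \<Rightarrow> real) \<Rightarrow> bool" where
  "strongly_convex \<mu> F \<longleftrightarrow> convex_on UNIV (\<lambda>x. F x - \<mu> / 2 * (norm x)^2)"

definition smooth :: "real \<Rightarrow> ('a::real_normed_vector \<Rightarrow> 'a) \<Rightarrow> bool" where
  "smooth L G \<longleftrightarrow> (\<forall>x y. norm (G x - G y) \<le> L * norm (x - y))"

definition bregman :: "('a::real_inner \<Rightarrow> real) \<Rightarrow> ('a \<Rightarrow> 'a) \<Rightarrow> 'a \<Rightarrow> 'a \<Rightarrow> real" where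
  "bregman F G u v = F u - F v - G v \<bullet> (u - v)"

definition apapc_step ::
  "('a::real_vector \<Rightarrow> 'a) \<Rightarrow> ('a \<Rightarrow> 'a) \<Rightarrow> real \<Rightarrow> real \<Rightarrow> real \<Rightarrow> real \<Rightarrow> 'a \<times> 'a \<times> 'a \<Rightarrow> 'a \<times> 'a \<times> 'a" where
  "apapc_step G W \<eta> \<theta> \<alpha> \<tau> s =
     (let x = fst s; xf = fst (snd s); y = snd (snd s);
          xg = \<tau> *\<^sub>R x + (1 - \<tau>) *\<^sub>R xf;
          xh = inverse (1 + \<eta> * \<alpha>) *\<^sub>R (x - \<eta> *\<^sub>R (G xg - \<alpha> *\<^sub>R xg + y));
          y' = y + \<theta> *\<^sub>R W xh;
          x' = inverse (1 + \<eta> * \<alpha>) *\<^sub>R (x - \<eta> *\<^sub>R (G xg - \<alpha> *\<^sub>R xg + y'));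
          xf' = xg + (2 * \<tau> / (2 - \<tau>)) *\<^sub>R (x' - x)
      in (x', xf', y'))"

fun apapc ::
  "('a::real_vector \<Rightarrow> 'a) \<Rightarrow> ('a \<Rightarrow> 'a) \<Rightarrow> real \<Rightarrow> real \<Rightarrow> real \<Rightarrow> real \<Rightarrow> 'a \<Rightarrow> 'a \<Rightarrow> nat \<Rightarrow> 'a \<times> 'a \<times> 'a" where
  "apapc G W \<eta> \<theta> \<alpha> \<tau> x0 y0 0 = (x0, x0, y0)"
| "apapc G W \<eta> \<theta> \<alpha> \<tau> x0 y0 (Suc k) = apapc_step G W \<eta> \<theta> \<alpha> \<tau> (apapc G W \<eta> \<theta> \<alpha> \<tau> x0 y0 k)"

definition apapc_x where "apapc_x G W \<eta> \<theta> \<alpha> \<tau> x0 y0 k = fst (apapc G W \<eta> \<theta> \<alpha> \<tau> x0 y0 k)"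
definition apapc_xf where "apapc_xf G W \<eta> \<theta> \<alpha> \<tau> x0 y0 k = fst (snd (apapc G W \<eta> \<theta> \<alpha> \<tau> x0 y0 k))"
definition apapc_y where "apapc_y G W \<eta> \<theta> \<alpha> \<tau> x0 y0 k = snd (snd (apapc G W \<eta> \<theta> \<alpha> \<tau> x0 y0 k))"
definition apapc_xg where "apapc_xg G W \<eta> \<theta> \<alpha> \<tau> x0 y0 k =
   \<tau> *\<^sub>R apapc_x G W \<eta> \<theta> \<alpha> \<tau> x0 y0 k + (1 - \<tau>) *\<^sub>R apapc_xf G W \<eta> \<theta> \<alpha> \<tau> x0 y0 k"

end

theory Submission
  imports Defs
begin

lemma stepX: fixes G W :: "'a::real_vector \<Rightarrow> 'a"
  shows "apapc_x G W \<eta> \<theta> \<alpha> \<tau> x0 y0 (Suc k) = inverse (1 + \<eta> * \<alpha>) *\<^sub>R (apapc_x G W \<eta> \<theta> \<alpha> \<tau> x0 y0 k - \<eta> *\<^sub>R (G (apapc_xg G W \<eta> \<theta> \<alpha> \<tau> x0 y0 k) - \<alpha> *\<^sub>R (apapc_xg G W \<eta> \<theta> \<alpha> \<tau> x0 y0 k) + apapc_y G W \<eta> \<theta> \<alpha> \<tau> x0 y0 (Suc k)))"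
  unfolding apapc_x_def apapc_y_def apapc_xg_def apapc_xf_def apapc.simps(2)
  apply (cases "apapc G W \<eta> \<theta> \<alpha> \<tau> x0 y0 k")
  apply (simp only: apapc_step_def Let_def prod.sel prod.case)
  done

lemma stepD: fixes x x' g gs xg xs y' :: "'a::real_vector"
  assumes "x = (1 + \<eta> * \<alpha>) *\<^sub>R x' + \<eta> *\<^sub>R (g - \<alpha> *\<^sub>R xg + y')"
  shows "x' - x = - \<eta> *\<^sub>R ((y' + gs) + ((g - \<alpha> *\<^sub>R xg) - (gs - \<alpha> *\<^sub>R xs)) + \<alpha> *\<^sub>R (x' - xs))"
  unfolding assms by (simp add: algebra_simps scaleR_add_left)

lemma sq3: "((p::real) + r + t)^2 \<le> 2 * p^2 + 4 * r^2 + 4 * t^2"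
proof -
  have "2 * p^2 + 4 * r^2 + 4 * t^2 - (p + r + t)^2 = (p - r - t)^2 + 2 * (r - t)^2"
    by (simp add: power2_eq_square algebra_simps)
  moreover have "0 \<le> (p - r - t)^2 + 2 * (r - t)^2" by simp
  ultimately show ?thesis by linarith
qed

lemma fo_convex:
  fixes \<phi> :: "'a::real_inner \<Rightarrow> real"
  assumes cv: "convex_on UNIV \<phi>"
    and d: "(\<phi> has_derivative (\<lambda>h. g \<bullet> h)) (at x)"
  shows "\<phi> x + g \<bullet> (y - x) \<le> \<phi> y"
proof -
  define f where "f t = \<phi> (x + t *\<^sub>R (y - x))" for t :: real
  have cf: "convex_on UNIV f"
    unfolding f_def convex_on_def
  proof (intro conjI allI impI ballI; clarsimp?)
    fix t u a b :: real assume "0 \<le> a" "0 \<le> b" "a + b = 1"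
    then have "x + (a * t + b * u) *\<^sub>R (y - x) = a *\<^sub>R (x + t *\<^sub>R (y - x)) + b *\<^sub>R (x + u *\<^sub>R (y - x))"
      by (simp add: algebra_simps flip: scaleR_add_left)
    then show "\<phi> (x + (a * t + b * u) *\<^sub>R (y - x)) \<le> a * \<phi> (x + t *\<^sub>R (y - x)) + b * \<phi> (x + u *\<^sub>R (y - x))"
      using convex_onD[OF cv] \<open>0 \<le> a\<close> \<open>0 \<le> b\<close> \<open>a + b = 1\<close>
      by (metis UNIV_I convex_on_def cv)
  qed
  have "((\<lambda>t. x + t *\<^sub>R (y - x)) has_derivative (\<lambda>t. t *\<^sub>R (y - x))) (at 0)"
    by (auto intro!: derivative_eq_intros)
  from has_derivative_compose[OF this, of \<phi> "\<lambda>h. g \<bullet> h"] d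
  have "(f has_derivative (\<lambda>t. g \<bullet> (t *\<^sub>R (y - x)))) (at 0)"
    unfolding f_def by simp
  then have "(f has_field_derivative (g \<bullet> (y - x))) (at 0)"
  proof -
    have "(\<lambda>t. t * (g \<bullet> (y - x))) = (*) (g \<bullet> (y - x))" by (auto simp: fun_eq_iff)
    then show ?thesis using \<open>(f has_derivative _) _\<close> by (simp add: has_field_derivative_def)
  qed
  from convex_on_imp_above_tangent[OF cf, of 0 1 "g \<bullet> (y - x)"] this
  have "f 1 - f 0 \<ge> g \<bullet> (y - x)" by simp
  then show ?thesis unfolding f_def by simp
qed

lemma descent:
  fixes \<phi> :: "'a::real_inner \<Rightarrow> real"
  assumes d: "\<And>z. (\<phi> has_derivative (\<lambda>h. Gp z \<bullet> h)) (at z)"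
    and lip: "\<And>u v. norm (Gp u - Gp v) \<le> L * norm (u - v)"
  shows "\<phi> y \<le> \<phi> x + Gp x \<bullet> (y - x) + L / 2 * (norm (y - x))^2"
proof -
  define e where "e = y - x"
  define k where "k t = \<phi> (x + t *\<^sub>R e) - \<phi> x - t * (Gp x \<bullet> e) - L / 2 * t^2 * (norm e)^2" for t :: real
  have "k 0 \<ge> k 1"
  proof (rule DERIV_nonpos_imp_nonincreasing[of 0 1 k])
    fix t :: real assume t: "0 \<le> t" "t \<le> 1"
    have lin: "((\<lambda>t. x + t *\<^sub>R e) has_derivative (\<lambda>s. s *\<^sub>R e)) (at t)"
      by (auto intro!: derivative_eq_intros)
    from has_derivative_compose[OF lin, of \<phi> "\<lambda>h. Gp (x + t *\<^sub>R e) \<bullet> h"] d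
    have d1: "((\<lambda>t. \<phi> (x + t *\<^sub>R e)) has_derivative (\<lambda>s. s * (Gp (x + t *\<^sub>R e) \<bullet> e))) (at t)"
      by simp
    have "(k has_derivative (\<lambda>s. s * (Gp (x + t *\<^sub>R e) \<bullet> e) - s * (Gp x \<bullet> e) - s * (L * t * (norm e)^2))) (at t)"
      unfolding k_def
      by (rule derivative_eq_intros d1 | simp)+ (auto simp: algebra_simps power2_eq_square)
    moreover have "(\<lambda>s. s * (Gp (x + t *\<^sub>R e) \<bullet> e) - s * (Gp x \<bullet> e) - s * (L * t * (norm e)^2))
        = (*) (Gp (x + t *\<^sub>R e) \<bullet> e - Gp x \<bullet> e - L * t * (norm e)^2)"
      by (auto simp: fun_eq_iff algebra_simps)
    ultimately have "DERIV k t :> (Gp (x + t *\<^sub>R e) \<bullet> e - Gp x \<bullet> e - L * t * (norm e)^2)"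
      by (simp add: has_field_derivative_def)
    moreover have "Gp (x + t *\<^sub>R e) \<bullet> e - Gp x \<bullet> e \<le> L * t * (norm e)^2"
    proof -
      have "Gp (x + t *\<^sub>R e) \<bullet> e - Gp x \<bullet> e = (Gp (x + t *\<^sub>R e) - Gp x) \<bullet> e"
        by (simp add: inner_diff_left)
      also have "\<dots> \<le> norm (Gp (x + t *\<^sub>R e) - Gp x) * norm e"
        by (rule norm_cauchy_schwarz)
      also have "\<dots> \<le> (L * (t * norm e)) * norm e"
        using lip[of "x + t *\<^sub>R e" x] t by (intro mult_right_mono) auto
      finally show ?thesis by (simp add: power2_eq_square algebra_simps)
    qed
    ultimately show "\<exists>y. DERIV k t :> y \<and> y \<le> 0" by auto
  qed simp
  then show ?thesis unfolding k_def e_def by simp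
qed

lemma cocoercive:
  fixes \<phi> :: "'a::real_inner \<Rightarrow> real"
  assumes cv: "convex_on UNIV \<phi>"
    and d: "\<And>z. (\<phi> has_derivative (\<lambda>h. Gp z \<bullet> h)) (at z)"
    and lip: "\<And>u v. norm (Gp u - Gp v) \<le> L * norm (u - v)"
    and L: "0 < L"
  shows "(norm (Gp u - Gp v))^2 \<le> 2 * L * (\<phi> u - \<phi> v - Gp v \<bullet> (u - v))"
proof -
  define g where "g = Gp u - Gp v"
  define w where "w = u - (1 / L) *\<^sub>R g"
  have A: "\<phi> w \<le> \<phi> u + Gp u \<bullet> (w - u) + L / 2 * (norm (w - u))^2"
    by (rule descent[OF d lip])
  have B: "\<phi> v + Gp v \<bullet> (w - v) \<le> \<phi> w"
    by (rule fo_convex[OF cv d])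
  have wu: "w - u = - (1 / L) *\<^sub>R g" unfolding w_def by simp
  have wv: "w - v = (u - v) - (1 / L) *\<^sub>R g" unfolding w_def by simp
  have n: "(norm (w - u))^2 = (1 / L)^2 * (norm g)^2"
    unfolding wu by (simp add: power_divide power2_abs field_simps)
  have "Gp u \<bullet> (w - u) - Gp v \<bullet> (w - v) = - (1/L) * (g \<bullet> g) - Gp v \<bullet> (u - v)"
    unfolding wu wv g_def by (simp add: inner_diff_right inner_diff_left algebra_simps)
  then have key: "\<phi> v \<le> \<phi> u - (1/L) * (norm g)^2 - Gp v \<bullet> (u - v) + L / 2 * ((1 / L)^2 * (norm g)^2)"
    using A B n by (simp add: power2_norm_eq_inner)
  have "L / 2 * ((1 / L)^2 * (norm g)^2) = (norm g)^2 / (2 * L)"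
    using L by (simp add: power2_eq_square field_simps)
  moreover have "(1/L) * (norm g)^2 = 2 * ((norm g)^2 / (2 * L))"
    using L by (simp add: field_simps)
  ultimately have h: "(norm g)^2 / (2 * L) \<le> \<phi> u - \<phi> v - Gp v \<bullet> (u - v)"
    using key by linarith
  have "(norm g)^2 = 2 * L * ((norm g)^2 / (2 * L))" using L by simp
  also have "\<dots> \<le> 2 * L * (\<phi> u - \<phi> v - Gp v \<bullet> (u - v))"
    using h L by (intro mult_left_mono) auto
  finally show ?thesis unfolding g_def .
qed

lemma convex_norm_sq: "convex_on UNIV (\<lambda>x::'a::real_inner. (norm x)^2)"
  unfolding convex_on_def
proof (intro conjI ballI allI impI; clarsimp?)
  fix x y :: 'a and a b :: real
  assume ab: "0 \<le> a" "0 \<le> b" "a + b = 1"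
  have "a * (norm x)^2 + b * (norm y)^2 - (norm (a *\<^sub>R x + b *\<^sub>R y))^2 = a * b * (norm (x - y))^2"
  proof -
    have b: "b = 1 - a" using ab by simp
    have e1: "(norm (a *\<^sub>R x + b *\<^sub>R y))^2 = a*a*(x \<bullet> x) + 2*a*b*(x \<bullet> y) + b*b*(y \<bullet> y)"
      unfolding power2_norm_eq_inner
      by (simp add: inner_add_left inner_add_right inner_commute algebra_simps)
    have e2: "(norm (x - y))^2 = x \<bullet> x - 2 * (x \<bullet> y) + y \<bullet> y"
      unfolding power2_norm_eq_inner
      by (simp add: inner_diff_left inner_diff_right inner_commute algebra_simps)
    show ?thesis unfolding e1 e2 power2_norm_eq_inner b by (simp add: algebra_simps)
  qed
  moreover have "0 \<le> a * b * (norm (x - y))^2" using ab by simp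
  ultimately show "(norm (a *\<^sub>R x + b *\<^sub>R y))^2 \<le> a * (norm x)^2 + b * (norm y)^2" by linarith
qed


theorem mainTheorem6:
  fixes F :: "real^'d^'n \<Rightarrow> real"
    and G :: "real^'d^'n \<Rightarrow> real^'d^'n"
    and W :: "real^'d^'n \<Rightarrow> real^'d^'n"
    and x0 y0 xstar :: "real^'d^'n"
    and \<mu> L \<eta> \<theta> \<tau> \<alpha> :: real
    and k :: nat
  assumes grad: "\<And>x. (F has_derivative (\<lambda>h. G x \<bullet> h)) (at x)"
    and mu_pos: "0 < \<mu>" and mu_le_L: "\<mu> \<le> L"
    and sc: "strongly_convex \<mu> F"
    and sm: "smooth L G"
    and W_lin: "linear W"
    and W_sym: "\<And>u v. W u \<bullet> v = u \<bullet> W v"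
    and W_psd: "\<And>u. 0 \<le> u \<bullet> W u"
    and W_ker: "{u. W u = 0} = consensus"
    and xstar_in: "W xstar = 0"
    and xstar_min: "\<And>x. W x = 0 \<Longrightarrow> F xstar \<le> F x"
    and y0_range: "y0 \<in> range W"
    and eta_pos: "0 < \<eta>" and theta_pos: "0 < \<theta>"
    and tau_pos: "0 < \<tau>" and tau_le: "\<tau> \<le> 1"
    and alpha_pos: "0 < \<alpha>" and alpha_le: "\<alpha> \<le> \<mu>"
  shows "- 1 / (2 * \<eta>) * (norm (apapc_x G W \<eta> \<theta> \<alpha> \<tau> x0 y0 (Suc k) - apapc_x G W \<eta> \<theta> \<alpha> \<tau> x0 y0 k))^2
     \<le> - \<eta> / 4 * (norm (apapc_y G W \<eta> \<theta> \<alpha> \<tau> x0 y0 (Suc k) - (- G xstar)))^2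
       + \<eta> * \<alpha>^2 * (norm (apapc_x G W \<eta> \<theta> \<alpha> \<tau> x0 y0 (Suc k) - xstar))^2
       + 2 * \<eta> * L * bregman F G (apapc_xg G W \<eta> \<theta> \<alpha> \<tau> x0 y0 k) xstar"
proof -
  define h where "h x = F x - \<alpha>/2 * (norm x)^2" for x
  define Gh where "Gh x = G x - \<alpha> *\<^sub>R x" for x
  have hcv: "convex_on UNIV h"
  proof -
    have "convex_on UNIV (\<lambda>x. (F x - \<mu>/2 * (norm x)^2) + (\<mu>-\<alpha>)/2 * (norm x)^2)"
      using sc alpha_le unfolding strongly_convex_def
      by (intro convex_on_add convex_on_cmul convex_norm_sq) auto
    moreover have "(\<lambda>x. (F x - \<mu>/2 * (norm x)^2) + (\<mu>-\<alpha>)/2 * (norm x)^2) = h"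
      by (auto simp: h_def fun_eq_iff field_simps)
    ultimately show ?thesis by simp
  qed
  have hd: "(h has_derivative (\<lambda>v. Gh z \<bullet> v)) (at z)" for z
  proof -
    have "(h has_derivative (\<lambda>v. G z \<bullet> v - \<alpha>/2 * (v \<bullet> z + z \<bullet> v))) (at z)"
      unfolding h_def power2_norm_eq_inner by (auto intro!: derivative_eq_intros grad)
    moreover have "(\<lambda>v. G z \<bullet> v - \<alpha>/2 * (v \<bullet> z + z \<bullet> v)) = (\<lambda>v. Gh z \<bullet> v)"
      by (auto simp: fun_eq_iff Gh_def inner_diff_left inner_commute algebra_simps)
    ultimately show ?thesis by simp
  qed
  have L0: "0 < L" using mu_pos mu_le_L by simp
  have hlip: "norm (Gh u - Gh v) \<le> L * norm (u - v)" for u v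
  proof -
    define dd where "dd = u - v"
    define q where "q = G u - G v"
    have m1: "h u + Gh u \<bullet> (v - u) \<le> h v" by (rule fo_convex[OF hcv hd])
    have m2: "h v + Gh v \<bullet> (u - v) \<le> h u" by (rule fo_convex[OF hcv hd])
    have "Gh u \<bullet> (v - u) + Gh v \<bullet> (u - v) = - ((q - \<alpha> *\<^sub>R dd) \<bullet> dd)"
      unfolding Gh_def q_def dd_def by (simp add: inner_diff_left inner_diff_right algebra_simps)
    then have mono: "0 \<le> (q - \<alpha> *\<^sub>R dd) \<bullet> dd" using m1 m2 by linarith
    have gd: "Gh u - Gh v = q - \<alpha> *\<^sub>R dd" unfolding Gh_def q_def dd_def by (simp add: algebra_simps)
    have e: "(norm (q - \<alpha> *\<^sub>R dd))^2 = (norm q)^2 - 2 * \<alpha> * (q \<bullet> dd) + \<alpha>^2 * (norm dd)^2"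
      unfolding power2_norm_eq_inner
      by (simp add: inner_diff_left inner_diff_right inner_commute algebra_simps power2_eq_square)
    have qd: "q \<bullet> dd \<ge> \<alpha> * (norm dd)^2"
      using mono by (simp add: inner_diff_left power2_norm_eq_inner)
    have nq: "norm q \<le> L * norm dd" using sm unfolding smooth_def q_def dd_def by blast
    have "(norm q)^2 \<le> (L * norm dd)^2" using nq by (intro power_mono) auto
    then have "(norm (q - \<alpha> *\<^sub>R dd))^2 \<le> (L * norm dd)^2"
    proof -
      have "2 * \<alpha> * (\<alpha> * (norm dd)^2) \<le> 2 * \<alpha> * (q \<bullet> dd)"
        using qd alpha_pos by (intro mult_left_mono) auto
      moreover have "0 \<le> \<alpha>^2 * (norm dd)^2" by simp
      moreover have "2 * \<alpha> * (\<alpha> * (norm dd)^2) = 2 * (\<alpha>^2 * (norm dd)^2)"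
        by (simp add: power2_eq_square)
      ultimately show ?thesis using e \<open>(norm q)^2 \<le> (L * norm dd)^2\<close> by linarith
    qed
    then have "norm (q - \<alpha> *\<^sub>R dd) \<le> L * norm dd"
      using L0 by (rule_tac power2_le_imp_le) (simp_all add: less_imp_le)
    then show ?thesis using gd dd_def by simp
  qed
  define x where "x = apapc_x G W \<eta> \<theta> \<alpha> \<tau> x0 y0 k"
  define xg where "xg = apapc_xg G W \<eta> \<theta> \<alpha> \<tau> x0 y0 k"
  define x' where "x' = apapc_x G W \<eta> \<theta> \<alpha> \<tau> x0 y0 (Suc k)"
  define y' where "y' = apapc_y G W \<eta> \<theta> \<alpha> \<tau> x0 y0 (Suc k)"
  have X: "x' = inverse (1 + \<eta> * \<alpha>) *\<^sub>R (x - \<eta> *\<^sub>R (G xg - \<alpha> *\<^sub>R xg + y'))"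
    unfolding x'_def y'_def x_def xg_def by (rule stepX)
  have pos: "0 < 1 + \<eta> * \<alpha>" using eta_pos alpha_pos by (simp add: add_pos_pos)
  have X2: "x = (1 + \<eta> * \<alpha>) *\<^sub>R x' + \<eta> *\<^sub>R (G xg - \<alpha> *\<^sub>R xg + y')"
    using X pos by simp
  define a where "a = y' + G xstar"
  define b where "b = Gh xg - Gh xstar"
  define c where "c = \<alpha> *\<^sub>R (x' - xstar)"
  have D: "x' - x = - \<eta> *\<^sub>R (a + b + c)"
    unfolding a_def b_def c_def Gh_def by (rule stepD[OF X2])
  have nD: "norm (x' - x) = \<eta> * norm (a + b + c)"
    unfolding D using eta_pos by simp
  have nc: "(norm c)^2 = \<alpha>^2 * (norm (x' - xstar))^2"
    unfolding c_def using alpha_pos by (simp add: power_mult_distrib)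
  have cc: "(norm b)^2 \<le> 2 * L * (h xg - h xstar - Gh xstar \<bullet> (xg - xstar))"
    unfolding b_def by (rule cocoercive[OF hcv hd hlip L0])
  have hb: "h xg - h xstar - Gh xstar \<bullet> (xg - xstar) = bregman F G xg xstar - \<alpha>/2 * (norm (xg - xstar))^2"
    unfolding h_def Gh_def bregman_def power2_norm_eq_inner
    by (simp add: inner_diff_left inner_diff_right inner_commute algebra_simps)
  have nb: "(norm b)^2 \<le> 2 * L * bregman F G xg xstar"
  proof -
    have "2 * L * (h xg - h xstar - Gh xstar \<bullet> (xg - xstar)) \<le> 2 * L * bregman F G xg xstar"
      unfolding hb using L0 alpha_pos by (intro mult_left_mono) auto
    then show ?thesis using cc by linarith
  qed
  have tri: "norm a \<le> norm (a + b + c) + norm b + norm c"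
  proof -
    have e: "a = ((a + b + c) - b) - c" by simp
    have t1: "norm (((a + b + c) - b) - c) \<le> norm ((a + b + c) - b) + norm c" by (rule norm_triangle_ineq4)
    have t2: "norm ((a + b + c) - b) \<le> norm (a + b + c) + norm b" by (rule norm_triangle_ineq4)
    from t1 t2 have "norm (((a + b + c) - b) - c) \<le> norm (a + b + c) + norm b + norm c" by linarith
    then show ?thesis using e by metis
  qed
  have sq: "(norm a)^2 \<le> 2 * (norm (a + b + c))^2 + 4 * (norm b)^2 + 4 * (norm c)^2"
  proof -
    have "(norm a)^2 \<le> (norm (a + b + c) + norm b + norm c)^2"
      using tri by (intro power_mono) auto
    also have "\<dots> \<le> 2 * (norm (a + b + c))^2 + 4 * (norm b)^2 + 4 * (norm c)^2"
      by (rule sq3)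
    finally show ?thesis .
  qed
  have ya: "norm (y' - (- G xstar)) = norm a" unfolding a_def by simp
  have goal: "- 1 / (2 * \<eta>) * (\<eta> * norm (a + b + c))^2
     \<le> - \<eta> / 4 * (norm a)^2 + \<eta> * \<alpha>^2 * (norm (x' - xstar))^2 + 2 * \<eta> * L * bregman F G xg xstar"
  proof -
    have l: "- 1 / (2 * \<eta>) * (\<eta> * norm (a + b + c))^2 = - \<eta> / 2 * (norm (a + b + c))^2"
      using eta_pos by (simp add: power2_eq_square field_simps)
    have "\<eta> / 4 * (norm a)^2 \<le> \<eta> / 4 * (2 * (norm (a + b + c))^2 + 4 * (norm b)^2 + 4 * (norm c)^2)"
      using sq eta_pos by (intro mult_left_mono) auto
    moreover have "\<eta> * (norm b)^2 \<le> \<eta> * (2 * L * bregman F G xg xstar)"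
      using nb eta_pos by (intro mult_left_mono) auto
    ultimately show ?thesis unfolding l using nc by (simp add: algebra_simps)
  qed
  show ?thesis
    using goal unfolding nD[symmetric] ya[symmetric] x_def[symmetric] x'_def[symmetric] y'_def[symmetric] xg_def[symmetric] .
qed

end
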